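(* Let $F$ be an infinite field (e.g. $\mathbb{R}$ or $\mathbb{C}$), let $V$ be a vector space over $F$, and let $n\ge 1$. If a widget with $n$ pairs in $V$ is valid, then it contains a subwidget which is legal but not full.
   Context: A widget with $n$ pairs in $V$ is an indexed family of $n$ pairs of vectors $p_i=(p_i^+,p_i^-)$, $i=1,\dots,n$, in $V$ (the vectors $p_i^+,p_i^-$ are called the points of the pair $p_i$). A section of a widget is a set of points containing at most one point from each pair. A widget with $n$ pairs is legal if every section spans a linear subspace of $V$ of dimension at most $n-1$. A widget with $n$ pairs is full if the linear span of all its $2n$ points has dimension at least $n$. A widget is valid if it is both legal and full. A subwidget of a widget with $n$ pairs is the widget formed by some $k$ of its pairs with $1\le k<n$; it is itself a widget with $k$ pairs, so it is legal if every one of its sections spans a subspace of dimension at most $k-1$, and full if its $2k$ points span a subspace of dimension at least $k$. *)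

theory Defs
  imports Complex_Main
begin

text \<open>A widget is an indexed family of pairs p i = (p_i^+, p_i^-), i ranging over a finite index
set I (a widget with n pairs has I = {0..<n}).\<close>

definition widget_section :: "nat set \<Rightarrow> (nat \<Rightarrow> 'v \<times> 'v) \<Rightarrow> 'v set \<Rightarrow> bool" where
  "widget_section I p S \<longleftrightarrow>
     (\<exists>J c. J \<subseteq> I \<and> (\<forall>i\<in>J. c i = fst (p i) \<or> c i = snd (p i)) \<and> S = c ` J)"

definition widget_legal ::
  "('f::field \<Rightarrow> 'v::ab_group_add \<Rightarrow> 'v) \<Rightarrow> nat set \<Rightarrow> (nat \<Rightarrow> 'v \<times> 'v) \<Rightarrow> bool" where
  "widget_legal scale I p \<longleftrightarrow>
     (\<forall>S. widget_section I p S \<longrightarrow> vector_space.dim scale S \<le> card I - 1)"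

definition widget_full ::
  "('f::field \<Rightarrow> 'v::ab_group_add \<Rightarrow> 'v) \<Rightarrow> nat set \<Rightarrow> (nat \<Rightarrow> 'v \<times> 'v) \<Rightarrow> bool" where
  "widget_full scale I p \<longleftrightarrow>
     card I \<le> vector_space.dim scale (\<Union>i\<in>I. {fst (p i), snd (p i)})"

definition widget_valid ::
  "('f::field \<Rightarrow> 'v::ab_group_add \<Rightarrow> 'v) \<Rightarrow> nat set \<Rightarrow> (nat \<Rightarrow> 'v \<times> 'v) \<Rightarrow> bool" where
  "widget_valid scale I p \<longleftrightarrow> widget_legal scale I p \<and> widget_full scale I p"

end

theory Submission
  imports Defs
begin

context vector_space
begin

lemma dim_subset_fin:
  assumes "S \<subseteq> T" "finite T"
  shows "dim S \<le> dim T"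
proof -
  obtain B where B: "B \<subseteq> T" "independent B" "T \<subseteq> span B" "card B = dim T"
    using basis_exists by blast
  have "finite B" using B assms finite_subset by blast
  then show ?thesis using dim_le_card[of S B] B assms by auto
qed

lemma dim_submod:
  assumes fX: "finite X" and fY: "finite Y"
  shows "dim (X \<union> Y) + dim (X \<inter> Y) \<le> dim X + dim Y"
proof -
  obtain B where B: "B \<subseteq> X \<inter> Y" "independent B" "X \<inter> Y \<subseteq> span B" "card B = dim (X \<inter> Y)"
    using basis_exists by blast
  obtain C where C: "B \<subseteq> C" "C \<subseteq> X" "independent C" "X \<subseteq> span C"
    using maximal_independent_subset_extend[of B X] B by blast
  obtain D where D: "B \<subseteq> D" "D \<subseteq> Y" "independent D" "Y \<subseteq> span D"
    using maximal_independent_subset_extend[of B Y] B by blast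
  have fC: "finite C" using C fX finite_subset by blast
  have fD: "finite D" using D fY finite_subset by blast
  have cC: "card C = dim X" using C basis_card_eq_dim by blast
  have cD: "card D = dim Y" using D basis_card_eq_dim by blast
  have "X \<union> Y \<subseteq> span (C \<union> D)"
    using C D span_mono[of C "C \<union> D"] span_mono[of D "C \<union> D"] by blast
  then have "dim (X \<union> Y) \<le> card (C \<union> D)" using dim_le_card fC fD by blast
  moreover have "card B \<le> card (C \<inter> D)" using B C D fC by (intro card_mono) auto
  moreover have "card C + card D = card (C \<union> D) + card (C \<inter> D)" using card_Un_Int fC fD by blast
  ultimately show ?thesis using B cC cD by linarith
qed

definition hall :: "nat \<Rightarrow> (nat \<Rightarrow> 'b set) \<Rightarrow> bool" where
  "hall n A \<longleftrightarrow> (\<forall>K. K \<subseteq> {0..<n} \<longrightarrow> card K \<le> dim (\<Union>i\<in>K. A i))"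

lemma hall_split:
  fixes A :: "nat \<Rightarrow> 'b set"
  assumes h: "local.hall n A" and fin: "\<And>j. j < n \<Longrightarrow> finite (A j)"
    and i: "i < n" and x: "x \<in> A i" and y: "y \<in> A i" and xy: "x \<noteq> y"
  shows "local.hall n (A(i := A i - {x})) \<or> local.hall n (A(i := A i - {y}))"
proof (rule ccontr)
  assume "\<not> ?thesis"
  then obtain K1 K2 where K1: "K1 \<subseteq> {0..<n}" "\<not> card K1 \<le> dim (\<Union>j\<in>K1. (A(i := A i - {x})) j)"
    and K2: "K2 \<subseteq> {0..<n}" "\<not> card K2 \<le> dim (\<Union>j\<in>K2. (A(i := A i - {y})) j)"
    unfolding hall_def by blast
  have iK1: "i \<in> K1"
  proof (rule ccontr)
    assume "i \<notin> K1"
    then have "(\<Union>j\<in>K1. (A(i := A i - {x})) j) = (\<Union>j\<in>K1. A j)" by auto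
    then show False using K1 h unfolding hall_def by auto
  qed
  have iK2: "i \<in> K2"
  proof (rule ccontr)
    assume "i \<notin> K2"
    then have "(\<Union>j\<in>K2. (A(i := A i - {y})) j) = (\<Union>j\<in>K2. A j)" by auto
    then show False using K2 h unfolding hall_def by auto
  qed
  define L1 where "L1 = K1 - {i}"
  define L2 where "L2 = K2 - {i}"
  define X where "X = (\<Union>j\<in>L1. A j) \<union> (A i - {x})"
  define Y where "Y = (\<Union>j\<in>L2. A j) \<union> (A i - {y})"
  have fK1: "finite K1" using K1 finite_subset by blast
  have fK2: "finite K2" using K2 finite_subset by blast
  have fL1: "finite L1" "finite L2" using fK1 fK2 L1_def L2_def by auto
  have eX: "(\<Union>j\<in>K1. (A(i := A i - {x})) j) = X"
    unfolding X_def L1_def using iK1 by auto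
  have eY: "(\<Union>j\<in>K2. (A(i := A i - {y})) j) = Y"
    unfolding Y_def L2_def using iK2 by auto
  have finX: "finite X" unfolding X_def L1_def using K1 fK1 fin i by auto
  have finY: "finite Y" unfolding Y_def L2_def using K2 fK2 fin i by auto
  have cK1: "card K1 = card L1 + 1" unfolding L1_def using card.remove[OF fK1 iK1] by simp
  have cK2: "card K2 = card L2 + 1" unfolding L2_def using card.remove[OF fK2 iK2] by simp
  have dX: "dim X \<le> card L1" using K1(2) unfolding eX cK1 by linarith
  have dY: "dim Y \<le> card L2" using K2(2) unfolding eY cK2 by linarith
  have U: "X \<union> Y = (\<Union>j\<in>K1 \<union> K2. A j)"
    unfolding X_def Y_def L1_def L2_def using iK1 iK2 xy by auto
  have "K1 \<union> K2 \<subseteq> {0..<n}" using K1(1) K2(1) by auto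
  then have "card (K1 \<union> K2) \<le> dim (X \<union> Y)"
    unfolding U by (rule h[unfolded hall_def, rule_format])
  moreover have "card (K1 \<union> K2) = card (L1 \<union> L2) + 1"
  proof -
    have "K1 \<union> K2 = insert i (L1 \<union> L2)" "i \<notin> L1 \<union> L2" unfolding L1_def L2_def using iK1 iK2 by auto
    then show ?thesis using fL1 by simp
  qed
  moreover have "card (L1 \<inter> L2) \<le> dim (X \<inter> Y)"
  proof -
    have "L1 \<inter> L2 \<subseteq> {0..<n}" using K1(1) unfolding L1_def by auto
    then have "card (L1 \<inter> L2) \<le> dim (\<Union>j\<in>L1 \<inter> L2. A j)"
      by (rule h[unfolded hall_def, rule_format])
    also have "\<dots> \<le> dim (X \<inter> Y)" 
      by (rule dim_subset_fin) (use finX in \<open>auto simp: X_def Y_def\<close>)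
    finally show ?thesis .
  qed
  moreover have "card L1 + card L2 = card (L1 \<union> L2) + card (L1 \<inter> L2)" using card_Un_Int fL1 by blast
  moreover have "dim (X \<union> Y) + dim (X \<inter> Y) \<le> dim X + dim Y" using dim_submod finX finY by blast
  ultimately show False using dX dY by linarith
qed

lemma hall_reduce:
  fixes A :: "nat \<Rightarrow> 'b set"
  shows "local.hall n A \<Longrightarrow> (\<And>j. j < n \<Longrightarrow> finite (A j)) \<Longrightarrow>
   \<exists>c. (\<forall>j<n. c j \<in> A j) \<and> local.hall n (\<lambda>j. {c j})"
proof (induction "\<Sum>j<n. card (A j)" arbitrary: A rule: less_induct)
  case less
  show ?case
  proof (cases "\<exists>i<n. 2 \<le> card (A i)")
    case True
    then obtain i where i: "i < n" "2 \<le> card (A i)" by blast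
    then obtain x y where xy: "x \<in> A i" "y \<in> A i" "x \<noteq> y"
      using card_le_Suc0_iff_eq[OF less.prems(2)[OF i(1)]] by force
    have gen: "\<exists>c. (\<forall>j<n. c j \<in> A j) \<and> local.hall n (\<lambda>j. {c j})"
      if hz: "local.hall n (A(i := A i - {z}))" and z: "z \<in> A i" for z
    proof -
      let ?A = "A(i := A i - {z})"
      have fA: "\<And>j. j < n \<Longrightarrow> finite (?A j)" using less.prems by auto
      have "(\<Sum>j<n. card (?A j)) < (\<Sum>j<n. card (A j))"
      proof (rule sum_strict_mono_ex1)
        show "\<forall>j\<in>{..<n}. card (?A j) \<le> card (A j)"
          using less.prems by (auto intro: card_mono)
        show "\<exists>j\<in>{..<n}. card (?A j) < card (A j)"
          using i z less.prems(2)[of i] by (intro bexI[of _ i]) (auto intro: card_Diff1_less)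
      qed simp
      from less.hyps[OF this hz fA] obtain c where "\<forall>j<n. c j \<in> ?A j" "local.hall n (\<lambda>j. {c j})" by blast
      then show ?thesis by (intro exI[of _ c]) (auto split: if_splits)
    qed
    from hall_split[OF less.prems(1) less.prems(2) i(1) xy] gen xy show ?thesis by blast
  next
    case False
    have ne: "A j \<noteq> {}" if "j < n" for j
    proof
      assume "A j = {}"
      moreover have "{j} \<subseteq> {0..<n}" using that by auto
      then have "card {j} \<le> dim (\<Union>k\<in>{j}. A k)" by (rule less.prems(1)[unfolded hall_def, rule_format])
      ultimately show False using dim_le_card'[of "{}"] by simp
    qed
    define c where "c j = (SOME x. x \<in> A j)" for j
    have cA: "c j \<in> A j" if "j < n" for j using ne[OF that] unfolding c_def by (simp add: some_in_eq)
    have single: "A j = {c j}" if "j < n" for j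
    proof -
      have "card (A j) \<le> 1" using False that by auto
      then show ?thesis using cA[OF that] card_le_Suc0_iff_eq[OF less.prems(2)[OF that]] by auto
    qed
    have "local.hall n (\<lambda>j. {c j})"
      unfolding hall_def
    proof (intro allI impI)
      fix K assume K: "K \<subseteq> {0..<n}"
      have "(\<Union>j\<in>K. {c j}) = (\<Union>j\<in>K. A j)"
      proof (intro SUP_cong refl)
        fix j assume "j \<in> K" then have "j < n" using K by auto
        then show "{c j} = A j" using single by simp
      qed
      then show "card K \<le> dim (\<Union>j\<in>K. {c j})" using less.prems(1) K unfolding hall_def by auto
    qed
    then show ?thesis using cA by blast
  qed
qed

end

theorem corollary1p2:
  fixes scale :: "'f::field \<Rightarrow> 'v::ab_group_add \<Rightarrow> 'v"
    and p :: "nat \<Rightarrow> 'v \<times> 'v"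
    and n :: nat
  assumes "vector_space scale"
    and "infinite (UNIV :: 'f set)"
    and "n \<ge> 1"
    and "widget_valid scale {0..<n} p"
  shows "\<exists>K. K \<subseteq> {0..<n} \<and> 1 \<le> card K \<and> card K < n
             \<and> widget_legal scale K p \<and> \<not> widget_full scale K p"
proof (rule ccontr)
  interpret V: vector_space scale by fact
  assume neg: "\<not> ?thesis"
  define P where "P i = {fst (p i), snd (p i)}" for i
  have nf_legal: "widget_legal scale K p" if nf: "\<not> widget_full scale K p" for K
    unfolding widget_legal_def
  proof (intro allI impI)
    fix S assume "widget_section K p S"
    then obtain J c where J: "J \<subseteq> K" "\<forall>i\<in>J. c i = fst (p i) \<or> c i = snd (p i)" "S = c ` J"
      unfolding widget_section_def by blast
    have "S \<subseteq> (\<Union>i\<in>K. {fst (p i), snd (p i)})" using J by auto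
    then have "V.dim S \<le> V.dim (\<Union>i\<in>K. {fst (p i), snd (p i)})" 
    proof (rule V.dim_subset_fin)
      have "card K \<noteq> 0" using nf unfolding widget_full_def by auto
      then have "finite K" by (meson card.infinite)
      then show "finite (\<Union>i\<in>K. {fst (p i), snd (p i)})" by simp
    qed
    then show "V.dim S \<le> card K - 1" using nf unfolding widget_full_def by linarith
  qed
  have full: "card K \<le> V.dim (\<Union>i\<in>K. P i)" if K: "K \<subseteq> {0..<n}" for K
  proof (cases "card K = 0")
    case True then show ?thesis by simp
  next
    case False
    show ?thesis
    proof (cases "card K < n")
      case True
      then have "widget_full scale K p" using neg K False nf_legal by (metis One_nat_def Suc_leI neq0_conv)
      then show ?thesis unfolding widget_full_def P_def .
    next
      case False
      have "card K \<le> n" using card_mono[OF _ K] by simp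
      then have "K = {0..<n}" using K False by (intro card_subset_eq) auto
      then show ?thesis using assms(4) unfolding widget_valid_def widget_full_def P_def by simp
    qed
  qed
  then have "V.hall n P" unfolding V.hall_def by blast
  moreover have "\<And>j. j < n \<Longrightarrow> finite (P j)" unfolding P_def by simp
  ultimately obtain c where c: "\<forall>j<n. c j \<in> P j" "V.hall n (\<lambda>j. {c j})"
    using V.hall_reduce by blast
  have "n \<le> V.dim (c ` {0..<n})"
  proof -
    have "(\<Union>j\<in>{0..<n}. {c j}) = c ` {0..<n}" by auto
    then show ?thesis using c(2) unfolding V.hall_def by (metis card_atLeastLessThan diff_zero order_refl)
  qed
  moreover have "widget_section {0..<n} p (c ` {0..<n})"
    unfolding widget_section_def using c(1) unfolding P_def
    by (intro exI[of _ "{0..<n}"] exI[of _ c]) auto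
  then have "V.dim (c ` {0..<n}) \<le> n - 1"
    using assms(4) unfolding widget_valid_def widget_legal_def by auto
  ultimately show False using assms(3) by linarith
qed

end
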